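(* Let $d\ge 1$ and let $\mu$ be a probability distribution on $Q_d$ such that for all $i\in[d]$ \[ w_i^0\geq \begin{cases}\frac34-\frac1{4d} & \text{if $d$ is odd},\\[2pt] \frac34-\frac1{4(d-1)} & \text{if $d$ is even}.\end{cases} \] Then $(\mathbf 0,\mathbf 0)$ is an equilibrium.
   Context: $Q_d=\{0,1\}^d$ with the Hamming distance $d(X,Y)=|\{i: x_i\neq y_i\}|$. A probability distribution on $Q_d$ is a function $\mu:Q_d\to\mathbb R_{\ge0}$ with $\sum_{V\in Q_d}\mu(V)=1$, extended to subsets by $\mu(\mathcal A)=\sum_{V\in\mathcal A}\mu(V)$. For $A,B\in Q_d$ let $V(A,B)=\{X\in Q_d: d(X,A)<d(X,B)\}$ and $T(A,B)=\{X\in Q_d: d(X,A)=d(X,B)\}$. The payoffs in position $(A,B)$ (Player 1 at $A$, Player 2 at $B$) are $P_1(A,B)=\mu(V(A,B))+\frac12\mu(T(A,B))$ and $P_2(A,B)=\mu(V(B,A))+\frac12\mu(T(A,B))$. The pair $(A,B)$ is an equilibrium if $P_1(A,B)\ge P_1(A',B)$ for all $A'\in Q_d$ and $P_2(A,B)\ge P_2(A,B')$ for all $B'\in Q_d$. For $i\in[d]$, $w_i^0=\mu(\{X\in Q_d: x_i=0\})$. $\mathbf 0=(0,\dots,0)$. *)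

theory Defs
  imports Complex_Main
begin

text \<open>The hypercube Q_d: bit vectors of length d, represented as lists of booleans
  (False = 0, True = 1); coordinate i (0-based) is xs ! i.\<close>
definition cube :: "nat \<Rightarrow> bool list set" where
  "cube d = {xs. length xs = d}"

definition hdist :: "bool list \<Rightarrow> bool list \<Rightarrow> nat" where
  "hdist X Y = card {i. i < length X \<and> X ! i \<noteq> Y ! i}"

definition prob_dist :: "nat \<Rightarrow> (bool list \<Rightarrow> real) \<Rightarrow> bool" where
  "prob_dist d \<mu> \<longleftrightarrow> (\<forall>V\<in>cube d. \<mu> V \<ge> 0) \<and> (\<Sum>V\<in>cube d. \<mu> V) = 1"

definition measure_of :: "(bool list \<Rightarrow> real) \<Rightarrow> bool list set \<Rightarrow> real" where
  "measure_of \<mu> S = (\<Sum>V\<in>S. \<mu> V)"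

definition Vor :: "nat \<Rightarrow> bool list \<Rightarrow> bool list \<Rightarrow> bool list set" where
  "Vor d A B = {X\<in>cube d. hdist X A < hdist X B}"

definition Tie :: "nat \<Rightarrow> bool list \<Rightarrow> bool list \<Rightarrow> bool list set" where
  "Tie d A B = {X\<in>cube d. hdist X A = hdist X B}"

definition payoff1 :: "nat \<Rightarrow> (bool list \<Rightarrow> real) \<Rightarrow> bool list \<Rightarrow> bool list \<Rightarrow> real" where
  "payoff1 d \<mu> A B = measure_of \<mu> (Vor d A B) + measure_of \<mu> (Tie d A B) / 2"

definition payoff2 :: "nat \<Rightarrow> (bool list \<Rightarrow> real) \<Rightarrow> bool list \<Rightarrow> bool list \<Rightarrow> real" where
  "payoff2 d \<mu> A B = measure_of \<mu> (Vor d B A) + measure_of \<mu> (Tie d A B) / 2"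

definition equilibrium :: "nat \<Rightarrow> (bool list \<Rightarrow> real) \<Rightarrow> bool list \<Rightarrow> bool list \<Rightarrow> bool" where
  "equilibrium d \<mu> A B \<longleftrightarrow>
     (\<forall>A'\<in>cube d. payoff1 d \<mu> A B \<ge> payoff1 d \<mu> A' B) \<and>
     (\<forall>B'\<in>cube d. payoff2 d \<mu> A B \<ge> payoff2 d \<mu> A B')"

definition w0 :: "nat \<Rightarrow> (bool list \<Rightarrow> real) \<Rightarrow> nat \<Rightarrow> real" where
  "w0 d \<mu> i = measure_of \<mu> {X\<in>cube d. X ! i = False}"

definition zero_vec :: "nat \<Rightarrow> bool list" where
  "zero_vec d = replicate d False"

end

theory Submission
  imports Defs
begin

lemma fin_cube: "finite (cube d)" unfolding cube_def
  using finite_lists_length_eq[of "UNIV::bool set" d] by simp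

lemma hdist_split:
  fixes X A :: "bool list"
  assumes X: "X \<in> cube d" and A: "A \<in> cube d"
  defines "S \<equiv> {i. i < d \<and> A ! i}"
  defines "Z \<equiv> card {i\<in>S. \<not> X ! i}"
  defines "Ou \<equiv> card {i. i < d \<and> \<not> A ! i \<and> X ! i}"
  shows "hdist X A = Z + Ou" "hdist X (zero_vec d) = (card S - Z) + Ou" "Z \<le> card S"
proof -
  have lx: "length X = d" using X by (simp add: cube_def)
  have fS: "finite S" unfolding S_def by simp
  have e1: "{i. i < length X \<and> X ! i \<noteq> A ! i} = {i\<in>S. \<not> X ! i} \<union> {i. i < d \<and> \<not> A ! i \<and> X ! i}"
    using lx unfolding S_def by auto
  show "hdist X A = Z + Ou" unfolding hdist_def e1 Z_def Ou_def
    by (subst card_Un_disjoint) (auto simp: S_def)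
  have e2: "{i. i < length X \<and> X ! i \<noteq> zero_vec d ! i} = {i\<in>S. X ! i} \<union> {i. i < d \<and> \<not> A ! i \<and> X ! i}"
    using lx unfolding S_def zero_vec_def by auto
  have c: "card {i\<in>S. X ! i} = card S - Z"
  proof -
    have "S = {i\<in>S. X ! i} \<union> {i\<in>S. \<not> X ! i}" by auto
    hence "card S = card {i\<in>S. X ! i} + Z" unfolding Z_def
      using fS by (metis (no_types, lifting) card_Un_disjoint disjoint_iff finite_Un mem_Collect_eq)
    thus ?thesis by simp
  qed
  show "hdist X (zero_vec d) = (card S - Z) + Ou" unfolding hdist_def e2 Ou_def c[symmetric]
    by (subst card_Un_disjoint) (auto simp: S_def)
  show "Z \<le> card S" unfolding Z_def using fS by (intro card_mono) auto
qed

lemma threshold: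
  fixes k d :: nat
  assumes "1 \<le> k" "k \<le> d"
  shows "(real k + real ((k - 1) div 2)) / 2 \<le>
     real k * (if odd d then 3/4 - 1/(4 * real d) else 3/4 - 1/(4 * (real d - 1)))"
proof -
  define c where "c = (if odd d then 3/4 - 1/(4 * real d) else 3/4 - 1/(4 * (real d - 1)))"
  have ck: "c \<ge> 3/4 - 1/(4 * real k)" if "odd k"
  proof (cases "odd d")
    case True
    have "1/(4 * real d) \<le> 1/(4 * real k)" using assms by (intro frac_le) auto
    then show ?thesis unfolding c_def using True by simp
  next
    case False
    then have "k \<noteq> d" using that by auto
    then have "real k \<le> real d - 1" using assms by linarith
    then have "1/(4 * (real d - 1)) \<le> 1/(4 * real k)" using assms by (intro frac_le) auto
    then show ?thesis unfolding c_def using False by simp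
  qed
  have ck2: "c \<ge> 3/4 - 1/(2 * real k)" if "even k"
  proof -
    have k2: "k \<ge> 2" using that assms by presburger
    show ?thesis
    proof (cases "odd d")
      case True
      have "1/(4 * real d) \<le> 1/(2 * real k)" using assms k2 by (intro frac_le) auto
      then show ?thesis unfolding c_def using True by simp
    next
      case False
      have "real d \<ge> 2" using k2 assms by simp
      then have "1/(4 * (real d - 1)) \<le> 1/(2 * real k)" using assms by (intro frac_le) auto
      then show ?thesis unfolding c_def using False by simp
    qed
  qed
  show ?thesis
  proof (cases "odd k")
    case True
    then obtain j where j: "k = 2*j+1" by (metis oddE)
    have "(k - 1) div 2 = j" using j by simp
    then have "(real k + real ((k - 1) div 2)) / 2 = real k * (3/4 - 1/(4 * real k))"
      using j by (simp add: field_simps)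
    also have "\<dots> \<le> real k * c" using ck[OF True] by (intro mult_left_mono) auto
    finally show ?thesis unfolding c_def .
  next
    case False
    then obtain j where j: "k = 2*j" by (metis evenE not_not)
    then have j1: "j \<ge> 1" using assms by simp
    have "(k - 1) div 2 = j - 1" using j j1 by presburger
    then have "(real k + real ((k - 1) div 2)) / 2 = real k * (3/4 - 1/(2 * real k))"
      using j j1 by (simp add: field_simps of_nat_diff)
    also have "\<dots> \<le> real k * c" using ck2 False by (intro mult_left_mono) auto
    finally show ?thesis unfolding c_def .
  qed
qed


lemma meas_filter: "measure_of \<mu> {X\<in>cube d. P X} = (\<Sum>X\<in>cube d. if P X then \<mu> X else 0)"
  unfolding measure_of_def using fin_cube by (simp add: sum.inter_filter)

lemma partition3:
  "measure_of \<mu> (Vor d A B) + measure_of \<mu> (Vor d B A) + measure_of \<mu> (Tie d A B) = (\<Sum>X\<in>cube d. \<mu> X)"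
proof -
  have "measure_of \<mu> (Vor d A B) + measure_of \<mu> (Vor d B A) + measure_of \<mu> (Tie d A B) =
     (\<Sum>X\<in>cube d. (if hdist X A < hdist X B then \<mu> X else 0) + (if hdist X B < hdist X A then \<mu> X else 0)
        + (if hdist X A = hdist X B then \<mu> X else 0))"
    unfolding Vor_def Tie_def meas_filter by (simp add: sum.distrib)
  also have "\<dots> = (\<Sum>X\<in>cube d. \<mu> X)" by (intro sum.cong) auto
  finally show ?thesis .
qed

lemma key:
  fixes d :: nat and \<mu> :: "bool list \<Rightarrow> real"
  assumes "d \<ge> 1"
    and pd: "prob_dist d \<mu>"
    and w: "\<forall>i<d. w0 d \<mu> i \<ge>
           (if odd d then 3/4 - 1/(4 * real d) else 3/4 - 1/(4 * (real d - 1)))"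
    and A: "A \<in> cube d"
  shows "measure_of \<mu> (Vor d A (zero_vec d)) \<le> measure_of \<mu> (Vor d (zero_vec d) A)"
proof -
  define c where "c = (if odd d then 3/4 - 1/(4 * real d) else 3/4 - 1/(4 * (real d - 1)))"
  define S where "S = {i. i < d \<and> A ! i}"
  define k where "k = card S"
  define Z where "Z X = card {i\<in>S. \<not> X ! i}" for X :: "bool list"
  have fS: "finite S" unfolding S_def by simp
  have kd: "k \<le> d" unfolding k_def S_def
    by (metis (no_types, lifting) card_lessThan card_mono finite_lessThan lessThan_iff mem_Collect_eq subsetI)
  have nn: "\<And>X. X \<in> cube d \<Longrightarrow> \<mu> X \<ge> 0" and s1: "(\<Sum>X\<in>cube d. \<mu> X) = 1"
    using pd unfolding prob_dist_def by auto
  have V1: "Vor d A (zero_vec d) = {X\<in>cube d. 2 * Z X < k}"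
  proof -
    { fix X assume X: "X \<in> cube d"
      note h = hdist_split[OF X A]
      have "hdist X A < hdist X (zero_vec d) \<longleftrightarrow> 2 * Z X < k"
        using h unfolding Z_def k_def S_def by linarith }
    thus ?thesis unfolding Vor_def by auto
  qed
  have V2: "Vor d (zero_vec d) A = {X\<in>cube d. 2 * Z X > k}"
  proof -
    { fix X assume X: "X \<in> cube d"
      note h = hdist_split[OF X A]
      have "hdist X (zero_vec d) < hdist X A \<longleftrightarrow> 2 * Z X > k"
        using h unfolding Z_def k_def S_def by linarith }
    thus ?thesis unfolding Vor_def by auto
  qed
  have Zk: "\<And>X. X \<in> cube d \<Longrightarrow> Z X \<le> k"
    using hdist_split(3) A unfolding Z_def k_def S_def by blast
  show ?thesis
  proof (cases "k = 0")
    case True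
    then have "Vor d A (zero_vec d) = {}" using V1 by simp
    moreover have "measure_of \<mu> (Vor d (zero_vec d) A) \<ge> 0"
      unfolding measure_of_def Vor_def by (intro sum_nonneg) (auto intro: nn)
    ultimately show ?thesis by (simp add: measure_of_def)
  next
    case False
    then have k1: "k \<ge> 1" by simp
    define m where "m = (k - 1) div 2"
    define K where "K = (real k + real m) / 2"
    define \<alpha> where "\<alpha> = (real k - real m) / 2"
    have mk: "m < k" unfolding m_def using k1 by simp
    have apos: "\<alpha> > 0" unfolding \<alpha>_def using mk by simp
    have pw: "\<mu> X * (real (Z X) - K) \<le> \<mu> X * (\<alpha> * ((if 2 * Z X > k then 1 else 0) - (if 2 * Z X < k then 1 else 0)))"
      if X: "X \<in> cube d" for X
    proof (intro mult_left_mono)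
      show "0 \<le> \<mu> X" using nn X .
      show "real (Z X) - K \<le> \<alpha> * ((if 2 * Z X > k then 1 else 0) - (if 2 * Z X < k then 1 else 0))"
      proof (cases "2 * Z X < k")
        case True
        then have "Z X \<le> m" unfolding m_def by linarith
        then have "real (Z X) \<le> real m" by simp
        then show ?thesis using True unfolding K_def \<alpha>_def by (simp add: field_simps)
      next
        case False
        note F = this
        show ?thesis
        proof (cases "2 * Z X = k")
          case True
          then have "2 * real (Z X) = real k" by (metis of_nat_mult of_nat_numeral)
          then show ?thesis using True F unfolding K_def \<alpha>_def by simp
        next
          case False
          have "real (Z X) \<le> real k" using Zk[OF X] by simp
          then show ?thesis using F False unfolding K_def \<alpha>_def by (simp add: field_simps)
        qed
      qed
    qed
    have wsum: "(\<Sum>i\<in>S. w0 d \<mu> i) = (\<Sum>X\<in>cube d. \<mu> X * real (Z X))"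
    proof -
      have "(\<Sum>i\<in>S. w0 d \<mu> i) = (\<Sum>i\<in>S. \<Sum>X\<in>cube d. if \<not> X ! i then \<mu> X else 0)"
        unfolding w0_def using meas_filter[of \<mu> d "\<lambda>X. \<not> X ! _"] by simp
      also have "\<dots> = (\<Sum>X\<in>cube d. \<Sum>i\<in>S. if \<not> X ! i then \<mu> X else 0)"
        by (rule sum.swap)
      also have "\<dots> = (\<Sum>X\<in>cube d. \<mu> X * real (Z X))"
      proof (intro sum.cong refl)
        fix X
        have "(\<Sum>i\<in>S. if \<not> X ! i then \<mu> X else 0) = (\<Sum>i\<in>{i\<in>S. \<not> X ! i}. \<mu> X)"
          using sum.inter_filter[OF fS, of "\<lambda>_. \<mu> X" "\<lambda>i. \<not> X ! i"] by simp
        also have "\<dots> = \<mu> X * real (Z X)" unfolding Z_def by simp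
        finally show "(\<Sum>i\<in>S. if \<not> X ! i then \<mu> X else 0) = \<mu> X * real (Z X)" .
      qed
      finally show ?thesis .
    qed
    have "real k * c \<le> (\<Sum>i\<in>S. w0 d \<mu> i)"
    proof -
      have "(\<Sum>i\<in>S. c) \<le> (\<Sum>i\<in>S. w0 d \<mu> i)"
        using w unfolding c_def S_def by (intro sum_mono) auto
      thus ?thesis unfolding k_def by simp
    qed
    moreover have "K \<le> real k * c"
      using threshold[OF k1 kd] unfolding K_def m_def c_def by simp
    ultimately have "K \<le> (\<Sum>X\<in>cube d. \<mu> X * real (Z X))" using wsum by simp
    then have "0 \<le> (\<Sum>X\<in>cube d. \<mu> X * (real (Z X) - K))"
      using s1 by (simp add: right_diff_distrib sum_subtractf sum_distrib_right[symmetric])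
    also have "\<dots> \<le> (\<Sum>X\<in>cube d. \<mu> X * (\<alpha> * ((if 2 * Z X > k then 1 else 0) - (if 2 * Z X < k then 1 else 0))))"
      by (intro sum_mono pw)
    also have "\<dots> = \<alpha> * ((\<Sum>X\<in>cube d. if 2 * Z X > k then \<mu> X else 0) - (\<Sum>X\<in>cube d. if 2 * Z X < k then \<mu> X else 0))"
    proof -
      have "(\<Sum>X\<in>cube d. \<mu> X * (\<alpha> * ((if 2 * Z X > k then 1 else 0) - (if 2 * Z X < k then 1 else 0))))
          = (\<Sum>X\<in>cube d. \<alpha> * (if 2 * Z X > k then \<mu> X else 0) - \<alpha> * (if 2 * Z X < k then \<mu> X else 0))"
        by (intro sum.cong) auto
      also have "\<dots> = \<alpha> * ((\<Sum>X\<in>cube d. if 2 * Z X > k then \<mu> X else 0) - (\<Sum>X\<in>cube d. if 2 * Z X < k then \<mu> X else 0))"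
        by (simp only: sum_subtractf sum_distrib_left[symmetric] right_diff_distrib)
      finally show ?thesis .
    qed
    also have "\<dots> = \<alpha> * (measure_of \<mu> (Vor d (zero_vec d) A) - measure_of \<mu> (Vor d A (zero_vec d)))"
      unfolding V1 V2 meas_filter ..
    finally show ?thesis using apos by (simp add: zero_le_mult_iff)
  qed
qed

theorem mainTheorem2:
  fixes d :: nat and \<mu> :: "bool list \<Rightarrow> real"
  assumes "d \<ge> 1"
    and "prob_dist d \<mu>"
    and "\<forall>i<d. w0 d \<mu> i \<ge>
           (if odd d then 3/4 - 1/(4 * real d) else 3/4 - 1/(4 * (real d - 1)))"
  shows "equilibrium d \<mu> (zero_vec d) (zero_vec d)"
proof -
  have s1: "(\<Sum>X\<in>cube d. \<mu> X) = 1" using assms(2) unfolding prob_dist_def by auto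
  have p00: "payoff1 d \<mu> (zero_vec d) (zero_vec d) = 1/2"
       "payoff2 d \<mu> (zero_vec d) (zero_vec d) = 1/2"
    unfolding payoff1_def payoff2_def Vor_def Tie_def measure_of_def using s1 by auto
  have gen: "measure_of \<mu> (Vor d A (zero_vec d)) + measure_of \<mu> (Tie d A (zero_vec d)) / 2 \<le> 1/2"
    if A: "A \<in> cube d" for A
    using key[OF assms A] partition3[of \<mu> d A "zero_vec d"] s1 by linarith
  have T: "Tie d (zero_vec d) B = Tie d B (zero_vec d)" for B unfolding Tie_def by auto
  show ?thesis unfolding equilibrium_def p00
    using gen unfolding payoff1_def payoff2_def T by auto
qed

end
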